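(* Fix $c, r, \epsilon > 0$ and let $\alpha(\epsilon) = \frac{e^{\epsilon}+1}{e^{\epsilon}-1}$. A binary-output stochastic quantizer is a stochastic mapping $Q : [c-r, c+r] \to \{\gamma_1, \gamma_2\}$, where $\gamma_1, \gamma_2 \in \mathbb{R}$. Consider the following conditions on such a quantizer: (C1) Unbiasedness: $\mathbb{E}(Q(w)) = w$ for all $w \in [c-r, c+r]$; (C2) $\epsilon$-PLDP: $\frac{P(Q(w) = \overline{w})}{P(Q(w') = \overline{w})} \le e^{\epsilon}$ for all $\overline{w} \in \{\gamma_1, \gamma_2\}$ and all $w, w' \in [c-r, c+r]$; (C3) Minimal MSE: $\mathbb{E}((Q(w) - w)^2)$ is minimized for every $w \in [c-r, c+r]$. Define the quantizer $Q(w) = c + U r \alpha(\epsilon)$ for $w \in [c-r, c+r]$, where $U$ is a $\{-1, 1\}$-valued random variable with $P(U = 1) = \frac{1}{2} + \frac{w - c}{2 r \alpha(\epsilon)}$ and $P(U = -1) = \frac{1}{2} - \frac{w - c}{2 r \alpha(\epsilon)}$. Then $Q$ is the unique binary-output stochastic quantizer satisfying conditions (C1)–(C3).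
   Context: In condition (C3) the minimization is over binary-output stochastic quantizers (including the choice of the output values $\gamma_1, \gamma_2$) satisfying the other conditions, and it is required to hold simultaneously at every input $w$. *)

theory Defs
  imports "HOL-Probability.Probability"
begin

text \<open>A stochastic quantizer on the interval [c-r, c+r] is modelled as a map
  from inputs to probability mass functions over the reals (the law of Q(w)).
  Only its values on the interval [c-r, c+r] are relevant.\<close>

definition alpha :: "real \<Rightarrow> real" where
  "alpha \<epsilon> = (exp \<epsilon> + 1) / (exp \<epsilon> - 1)"

definition binary_output ::
  "real \<Rightarrow> real \<Rightarrow> real \<Rightarrow> real \<Rightarrow> (real \<Rightarrow> real pmf) \<Rightarrow> bool" where
  "binary_output c r \<gamma>1 \<gamma>2 Q \<longleftrightarrow>
     (\<forall>w\<in>{c-r..c+r}. set_pmf (Q w) \<subseteq> {\<gamma>1, \<gamma>2})"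

definition unbiased :: "real \<Rightarrow> real \<Rightarrow> (real \<Rightarrow> real pmf) \<Rightarrow> bool" where
  "unbiased c r Q \<longleftrightarrow>
     (\<forall>w\<in>{c-r..c+r}. measure_pmf.expectation (Q w) (\<lambda>x. x) = w)"

text \<open>(C2) epsilon-PLDP, written multiplicatively (ratio bound P/P' \<le> e^eps)\<close>
definition pldp ::
  "real \<Rightarrow> real \<Rightarrow> real \<Rightarrow> real \<Rightarrow> real \<Rightarrow> (real \<Rightarrow> real pmf) \<Rightarrow> bool" where
  "pldp c r \<epsilon> \<gamma>1 \<gamma>2 Q \<longleftrightarrow>
     (\<forall>v\<in>{\<gamma>1, \<gamma>2}. \<forall>w\<in>{c-r..c+r}. \<forall>w'\<in>{c-r..c+r}.
        pmf (Q w) v \<le> exp \<epsilon> * pmf (Q w') v)"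

definition mse :: "(real \<Rightarrow> real pmf) \<Rightarrow> real \<Rightarrow> real" where
  "mse Q w = measure_pmf.expectation (Q w) (\<lambda>x. (x - w)\<^sup>2)"

definition admissible :: "real \<Rightarrow> real \<Rightarrow> real \<Rightarrow> (real \<Rightarrow> real pmf) \<Rightarrow> bool" where
  "admissible c r \<epsilon> Q \<longleftrightarrow>
     (\<exists>\<gamma>1 \<gamma>2. binary_output c r \<gamma>1 \<gamma>2 Q \<and> unbiased c r Q \<and> pldp c r \<epsilon> \<gamma>1 \<gamma>2 Q)"

definition min_mse :: "real \<Rightarrow> real \<Rightarrow> real \<Rightarrow> (real \<Rightarrow> real pmf) \<Rightarrow> bool" where
  "min_mse c r \<epsilon> Q \<longleftrightarrow>
     (\<forall>Q'. admissible c r \<epsilon> Q' \<longrightarrow> (\<forall>w\<in>{c-r..c+r}. mse Q w \<le> mse Q' w))"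

definition satisfies_C123 :: "real \<Rightarrow> real \<Rightarrow> real \<Rightarrow> (real \<Rightarrow> real pmf) \<Rightarrow> bool" where
  "satisfies_C123 c r \<epsilon> Q \<longleftrightarrow> admissible c r \<epsilon> Q \<and> min_mse c r \<epsilon> Q"

definition U_pmf :: "real \<Rightarrow> real \<Rightarrow> real \<Rightarrow> real \<Rightarrow> real pmf" where
  "U_pmf c r \<epsilon> w =
     map_pmf (\<lambda>b. if b then 1 else -1)
       (bernoulli_pmf (1/2 + (w - c) / (2 * r * alpha \<epsilon>)))"

definition Q_opt :: "real \<Rightarrow> real \<Rightarrow> real \<Rightarrow> real \<Rightarrow> real pmf" where
  "Q_opt c r \<epsilon> w = map_pmf (\<lambda>u. c + u * r * alpha \<epsilon>) (U_pmf c r \<epsilon> w)"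

end

theory Submission
  imports Defs
begin

lemma bin_facts:
  fixes M :: "real pmf"
  assumes "set_pmf M \<subseteq> {a, b}" "a \<noteq> b"
  shows "pmf M a + pmf M b = 1"
    and "measure_pmf.expectation M f = pmf M a * f a + pmf M b * f b"
    and "\<And>x. x \<noteq> a \<Longrightarrow> x \<noteq> b \<Longrightarrow> pmf M x = 0"
proof -
  show "pmf M a + pmf M b = 1"
    using sum_pmf_eq_1[of "{a,b}" M] assms by simp
  have "measure_pmf.expectation M f = (\<Sum>x\<in>{a,b}. f x * pmf M x)"
    by (rule integral_measure_pmf_real) (use assms in auto)
  then show "measure_pmf.expectation M f = pmf M a * f a + pmf M b * f b"
    using assms by simp
  show "\<And>x. x \<noteq> a \<Longrightarrow> x \<noteq> b \<Longrightarrow> pmf M x = 0"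
    using assms by (meson insertE set_pmf_iff singletonD subsetD)
qed

lemma alpha_gt: assumes "\<epsilon> > 0" shows "alpha \<epsilon> > 1"
proof -
  have "exp \<epsilon> > 1" using assms by simp
  then show ?thesis unfolding alpha_def by (simp add: field_simps)
qed

lemma analysis:
  fixes Q :: "real \<Rightarrow> real pmf"
  assumes r: "r > 0" and e: "\<epsilon> > 0" and lt: "g1 < g2"
    and bo: "binary_output c r g1 g2 Q" and ub: "unbiased c r Q" and pl: "pldp c r \<epsilon> g1 g2 Q"
  shows "g1 \<le> c - r * alpha \<epsilon>" "g2 \<ge> c + r * alpha \<epsilon>"
    "\<And>w. w \<in> {c-r..c+r} \<Longrightarrow> pmf (Q w) g2 = (w - g1) / (g2 - g1)"
    "\<And>w. w \<in> {c-r..c+r} \<Longrightarrow> pmf (Q w) g1 = (g2 - w) / (g2 - g1)"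
    "\<And>w. w \<in> {c-r..c+r} \<Longrightarrow> mse Q w = (w - g1) * (g2 - w)"
proof -
  have P: "pmf (Q w) g2 = (w - g1) / (g2 - g1) \<and> pmf (Q w) g1 = (g2 - w) / (g2 - g1)
     \<and> mse Q w = (w - g1) * (g2 - w)" if w: "w \<in> {c-r..c+r}" for w
  proof -
    have s: "set_pmf (Q w) \<subseteq> {g1, g2}" using bo w unfolding binary_output_def by blast
    note F = bin_facts[OF s less_imp_neq[OF lt]]
    have E: "pmf (Q w) g1 * g1 + pmf (Q w) g2 * g2 = w"
      using ub w F(2)[of "\<lambda>x. x"] unfolding unbiased_def by auto
    have q: "pmf (Q w) g1 = 1 - pmf (Q w) g2" using F(1) by simp
    have "pmf (Q w) g2 * (g2 - g1) = w - g1"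
      using E unfolding q by (simp add: algebra_simps)
    then have p2: "pmf (Q w) g2 = (w - g1) / (g2 - g1)"
      using lt by (simp add: eq_divide_eq)
    have p1: "pmf (Q w) g1 = (g2 - w) / (g2 - g1)"
      using F(1) p2 lt by (simp add: field_simps)
    have "mse Q w = pmf (Q w) g1 * (g1 - w)^2 + pmf (Q w) g2 * (g2 - w)^2"
      unfolding mse_def using F(2) by simp
    also have "\<dots> = ((g2 - w) * (g1 - w)^2 + (w - g1) * (g2 - w)^2) / (g2 - g1)"
      unfolding p1 p2 by (simp add: add_divide_distrib)
    also have "(g2 - w) * (g1 - w)^2 + (w - g1) * (g2 - w)^2 = ((w - g1) * (g2 - w)) * (g2 - g1)"
      by (simp add: power2_eq_square algebra_simps)
    also have "((w - g1) * (g2 - w)) * (g2 - g1) / (g2 - g1) = (w - g1) * (g2 - w)"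
      using lt by simp
    finally show ?thesis using p1 p2 by simp
  qed
  then show "\<And>w. w \<in> {c-r..c+r} \<Longrightarrow> pmf (Q w) g2 = (w - g1) / (g2 - g1)"
    "\<And>w. w \<in> {c-r..c+r} \<Longrightarrow> pmf (Q w) g1 = (g2 - w) / (g2 - g1)"
    "\<And>w. w \<in> {c-r..c+r} \<Longrightarrow> mse Q w = (w - g1) * (g2 - w)" by auto
  have i1: "c - r \<in> {c-r..c+r}" and i2: "c + r \<in> {c-r..c+r}" using r by auto
  define E where "E = exp \<epsilon>"
  have E1: "E > 1" using e unfolding E_def by simp
  have al: "alpha \<epsilon> = (E + 1) / (E - 1)" unfolding alpha_def E_def by simp
  have d: "g2 - g1 > 0" using lt by simp
  have "pmf (Q (c+r)) g2 \<le> E * pmf (Q (c-r)) g2"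
    using pl i1 i2 unfolding pldp_def E_def by blast
  then have "(c + r - g1) / (g2 - g1) \<le> E * ((c - r - g1) / (g2 - g1))"
    using P[OF i1] P[OF i2] by simp
  then have "(c + r - g1) / (g2 - g1) \<le> (E * (c - r - g1)) / (g2 - g1)" by simp
  then have A: "c + r - g1 \<le> E * (c - r - g1)" using d by (simp add: divide_le_cancel)
  have "pmf (Q (c-r)) g1 \<le> E * pmf (Q (c+r)) g1"
    using pl i1 i2 unfolding pldp_def E_def by blast
  then have "(g2 - (c - r)) / (g2 - g1) \<le> E * ((g2 - (c + r)) / (g2 - g1))"
    using P[OF i1] P[OF i2] by simp
  then have "(g2 - (c - r)) / (g2 - g1) \<le> (E * (g2 - (c + r))) / (g2 - g1)" by simp
  then have B: "g2 - (c - r) \<le> E * (g2 - (c + r))" using d by (simp add: divide_le_cancel)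
  have "r * (E + 1) \<le> (c - g1) * (E - 1)" using A by (simp add: algebra_simps)
  then show "g1 \<le> c - r * alpha \<epsilon>" unfolding al using E1 by (simp add: field_simps)
  have "r * (E + 1) \<le> (g2 - c) * (E - 1)" using B by (simp add: algebra_simps)
  then show "g2 \<ge> c + r * alpha \<epsilon>" unfolding al using E1 by (simp add: field_simps)
qed


lemma popt:
  fixes c r \<epsilon> w :: real
  assumes r: "r > 0" and e: "\<epsilon> > 0" and w: "w \<in> {c-r..c+r}"
  defines "p \<equiv> 1/2 + (w - c) / (2 * r * alpha \<epsilon>)"
  shows "1 / (exp \<epsilon> + 1) \<le> p" "p \<le> exp \<epsilon> / (exp \<epsilon> + 1)"
    "Q_opt c r \<epsilon> w = map_pmf (\<lambda>b. if b then c + r * alpha \<epsilon> else c - r * alpha \<epsilon>) (bernoulli_pmf p)"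
proof -
  define E where "E = exp \<epsilon>"
  have E1: "E > 1" using e unfolding E_def by simp
  have al: "alpha \<epsilon> = (E + 1) / (E - 1)" unfolding alpha_def E_def by simp
  have a0: "alpha \<epsilon> > 0" using alpha_gt[OF e] by simp
  have "\<bar>w - c\<bar> \<le> r" using w by auto
  then have "\<bar>w - c\<bar> / (r * alpha \<epsilon>) \<le> r / (r * alpha \<epsilon>)"
    by (rule divide_right_mono) (use r a0 in simp)
  then have "\<bar>(w - c) / (r * alpha \<epsilon>)\<bar> \<le> r / (r * alpha \<epsilon>)"
    using r a0 by (simp add: abs_divide abs_mult)
  also have "\<dots> = 1 / alpha \<epsilon>" using r by simp
  also have "\<dots> = (E - 1) / (E + 1)" unfolding al by simp
  finally have bb: "\<bar>(w - c) / (r * alpha \<epsilon>)\<bar> \<le> (E - 1) / (E + 1)" .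
  have b: "(w - c) / (r * alpha \<epsilon>) \<le> (E - 1) / (E + 1)" "- ((w - c) / (r * alpha \<epsilon>)) \<le> (E - 1) / (E + 1)"
    using bb abs_le_D1 abs_le_D2 by blast+
  define x where "x = (w - c) / (r * alpha \<epsilon>)"
  define k where "k = (E - 1) / (E + 1)"
  have pe: "p = 1/2 + x / 2" unfolding p_def x_def by (simp add: field_simps)
  have "1 / (E + 1) = 1/2 - k / 2" unfolding k_def using E1 by (simp add: field_simps)
  then show "1 / (exp \<epsilon> + 1) \<le> p" using b unfolding pe E_def[symmetric] x_def[symmetric] k_def[symmetric] by linarith
  have "E / (E + 1) = 1/2 + k / 2" unfolding k_def using E1 by (simp add: field_simps)
  then show "p \<le> exp \<epsilon> / (exp \<epsilon> + 1)" using b unfolding pe E_def[symmetric] x_def[symmetric] k_def[symmetric] by linarith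
  have f: "(\<lambda>u. c + u * r * alpha \<epsilon>) \<circ> (\<lambda>b. if b then 1 else - 1) =
      (\<lambda>b. if b then c + r * alpha \<epsilon> else c - r * alpha \<epsilon>)" by (auto simp: fun_eq_iff)
  show "Q_opt c r \<epsilon> w = map_pmf (\<lambda>b. if b then c + r * alpha \<epsilon> else c - r * alpha \<epsilon>) (bernoulli_pmf p)"
    unfolding Q_opt_def U_pmf_def map_pmf_comp p_def using f by (simp add: o_def)
qed

lemma popt2:
  fixes c r \<epsilon> w :: real
  assumes r: "r > 0" and e: "\<epsilon> > 0" and w: "w \<in> {c-r..c+r}"
  defines "p \<equiv> 1/2 + (w - c) / (2 * r * alpha \<epsilon>)"
  shows "set_pmf (Q_opt c r \<epsilon> w) \<subseteq> {c - r * alpha \<epsilon>, c + r * alpha \<epsilon>}"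
    "pmf (Q_opt c r \<epsilon> w) (c + r * alpha \<epsilon>) = p"
    "pmf (Q_opt c r \<epsilon> w) (c - r * alpha \<epsilon>) = 1 - p"
proof -
  note P = popt[OF r e w, folded p_def]
  have E1: "exp \<epsilon> > 1" using e by simp
  have "0 < exp \<epsilon> + 1" using exp_gt_zero[of \<epsilon>] by linarith
  then have "0 < 1 / (exp \<epsilon> + 1)" by simp
  moreover have "exp \<epsilon> / (exp \<epsilon> + 1) < 1" using \<open>0 < exp \<epsilon> + 1\<close> by (simp add: divide_less_eq)
  ultimately have p0: "0 < p" "p < 1" using P(1,2) by linarith+
  have a0: "alpha \<epsilon> > 0" using alpha_gt[OF e] by simp
  have ne: "c + r * alpha \<epsilon> \<noteq> c - r * alpha \<epsilon>" using r a0 by simp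
  show "set_pmf (Q_opt c r \<epsilon> w) \<subseteq> {c - r * alpha \<epsilon>, c + r * alpha \<epsilon>}"
    unfolding P(3) by auto
  have "(\<lambda>b. if b then c + r * alpha \<epsilon> else c - r * alpha \<epsilon>) -` {c + r * alpha \<epsilon>} = {True}"
    using ne by (auto split: if_splits)
  then show "pmf (Q_opt c r \<epsilon> w) (c + r * alpha \<epsilon>) = p"
    unfolding P(3) pmf_map using p0 by (simp add: measure_pmf_single)
  have "(\<lambda>b. if b then c + r * alpha \<epsilon> else c - r * alpha \<epsilon>) -` {c - r * alpha \<epsilon>} = {False}"
    using ne by (auto split: if_splits)
  then show "pmf (Q_opt c r \<epsilon> w) (c - r * alpha \<epsilon>) = 1 - p"
    unfolding P(3) pmf_map using p0 by (simp add: measure_pmf_single)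
qed


lemma adm_ordered:
  assumes r: "r > 0" and "admissible c r \<epsilon> Q"
  shows "\<exists>g1 g2. g1 < g2 \<and> binary_output c r g1 g2 Q \<and> unbiased c r Q \<and> pldp c r \<epsilon> g1 g2 Q"
proof -
  obtain g1 g2 where A: "binary_output c r g1 g2 Q" "unbiased c r Q" "pldp c r \<epsilon> g1 g2 Q"
    using assms unfolding admissible_def by blast
  have i1: "c - r \<in> {c-r..c+r}" and i2: "c + r \<in> {c-r..c+r}" using r by auto
  have "g1 \<noteq> g2"
  proof
    assume eq: "g1 = g2"
    have "measure_pmf.expectation (Q w) (\<lambda>x. x) = g1" if w: "w \<in> {c-r..c+r}" for w
    proof -
      have s: "set_pmf (Q w) \<subseteq> {g1}" using A(1) w eq unfolding binary_output_def by auto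
      have "measure_pmf.expectation (Q w) (\<lambda>x. x) = (\<Sum>x\<in>{g1}. x * pmf (Q w) x)"
        by (rule integral_measure_pmf_real) (use s in auto)
      moreover have "pmf (Q w) g1 = 1" using sum_pmf_eq_1[of "{g1}" "Q w"] s by simp
      ultimately show ?thesis by simp
    qed
    then have "c - r = g1" "c + r = g1" using A(2) i1 i2 unfolding unbiased_def by auto
    then show False using r by simp
  qed
  then show ?thesis
  proof (cases "g1 < g2")
    case True then show ?thesis using A by blast
  next
    case False
    with \<open>g1 \<noteq> g2\<close> have "g2 < g1" by simp
    moreover have "binary_output c r g2 g1 Q" using A(1) unfolding binary_output_def by (simp add: insert_commute)
    moreover have "pldp c r \<epsilon> g2 g1 Q" using A(3) unfolding pldp_def by (simp add: insert_commute)
    ultimately show ?thesis using A(2) by blast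
  qed
qed

lemma opt_adm:
  fixes c r \<epsilon> :: real
  assumes r: "r > 0" and e: "\<epsilon> > 0"
  shows "binary_output c r (c - r * alpha \<epsilon>) (c + r * alpha \<epsilon>) (Q_opt c r \<epsilon>)"
    "unbiased c r (Q_opt c r \<epsilon>)"
    "pldp c r \<epsilon> (c - r * alpha \<epsilon>) (c + r * alpha \<epsilon>) (Q_opt c r \<epsilon>)"
proof -
  define a where "a = r * alpha \<epsilon>"
  have a0: "a > 0" using alpha_gt[OF e] r unfolding a_def by simp
  have a2: "2 * r * alpha \<epsilon> = 2 * a" unfolding a_def by simp
  have ne: "c - a \<noteq> c + a" using a0 by simp
  show "binary_output c r (c - r * alpha \<epsilon>) (c + r * alpha \<epsilon>) (Q_opt c r \<epsilon>)"
    unfolding binary_output_def using popt2(1)[OF r e] by blast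
  show "unbiased c r (Q_opt c r \<epsilon>)"
    unfolding unbiased_def
  proof
    fix w assume w: "w \<in> {c-r..c+r}"
    define p where "p = 1/2 + (w - c) / (2 * a)"
    note P = popt2[OF r e w, folded a_def, unfolded a2, folded p_def]
    note F = bin_facts[OF P(1) ne]
    have "measure_pmf.expectation (Q_opt c r \<epsilon> w) (\<lambda>x. x) = (1 - p) * (c - a) + p * (c + a)"
      using F(2)[of "\<lambda>x. x"] P(2,3) by simp
    also have "\<dots> = c - a + 2 * a * p" by (simp add: algebra_simps)
    also have "2 * a * p = a + (w - c)" unfolding p_def using a0 by (simp add: field_simps)
    finally show "measure_pmf.expectation (Q_opt c r \<epsilon> w) (\<lambda>x. x) = w" by simp
  qed
  show "pldp c r \<epsilon> (c - r * alpha \<epsilon>) (c + r * alpha \<epsilon>) (Q_opt c r \<epsilon>)"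
    unfolding pldp_def
  proof (intro ballI)
    fix v w w' assume v: "v \<in> {c - r * alpha \<epsilon>, c + r * alpha \<epsilon>}" and w: "w \<in> {c-r..c+r}"
      and w': "w' \<in> {c-r..c+r}"
    define E where "E = exp \<epsilon>"
    have E1: "E > 1" using e unfolding E_def by simp
    define p where "p = 1/2 + (w - c) / (2 * r * alpha \<epsilon>)"
    define p' where "p' = 1/2 + (w' - c) / (2 * r * alpha \<epsilon>)"
    have k2: "1 - 1 / (E + 1) = E / (E + 1)" using E1 by (simp add: field_simps)
    have k3: "1 - E / (E + 1) = 1 / (E + 1)" using E1 by (simp add: field_simps)
    have B1: "1 / (E + 1) \<le> p" "p \<le> E / (E + 1)"
      using popt(1,2)[OF r e w] unfolding E_def p_def by auto
    have B2: "1 / (E + 1) \<le> p'" "p' \<le> E / (E + 1)"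
      using popt(1,2)[OF r e w'] unfolding E_def p'_def by auto
    have E0: "0 \<le> E" using E1 by simp
    show "pmf (Q_opt c r \<epsilon> w) v \<le> exp \<epsilon> * pmf (Q_opt c r \<epsilon> w') v"
      unfolding E_def[symmetric]
    proof (cases "v = c + r * alpha \<epsilon>")
      case True
      have "p \<le> E / (E + 1)" using B1(2) by simp
      also have "\<dots> = E * (1 / (E + 1))" by simp
      also have "\<dots> \<le> E * p'" by (rule mult_left_mono[OF B2(1) E0])
      finally have "p \<le> E * p'" .
      then show "pmf (Q_opt c r \<epsilon> w) v \<le> E * pmf (Q_opt c r \<epsilon> w') v"
        using True popt2(2)[OF r e w, folded p_def] popt2(2)[OF r e w', folded p'_def] by simp
    next
      case False
      then have vv: "v = c - r * alpha \<epsilon>" using v by simp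
      have "1 - p \<le> E / (E + 1)" using B1(1) k2 by linarith
      also have "\<dots> = E * (1 / (E + 1))" by simp
      also have "\<dots> \<le> E * (1 - p')" by (rule mult_left_mono) (use B2(2) k3 E0 in linarith)+
      finally have "1 - p \<le> E * (1 - p')" .
      then show "pmf (Q_opt c r \<epsilon> w) v \<le> E * pmf (Q_opt c r \<epsilon> w') v"
        using vv popt2(3)[OF r e w, folded p_def] popt2(3)[OF r e w', folded p'_def] by simp
    qed
  qed
qed

theorem proposition1:
  fixes c r \<epsilon> :: real
  assumes "c > 0" and "r > 0" and "\<epsilon> > 0"
  shows "satisfies_C123 c r \<epsilon> (Q_opt c r \<epsilon>) \<and>
         (\<forall>Q. satisfies_C123 c r \<epsilon> Q \<longrightarrow> (\<forall>w\<in>{c-r..c+r}. Q w = Q_opt c r \<epsilon> w))"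
proof -
  have r: "r > 0" and e: "\<epsilon> > 0" using assms by auto
  define a where "a = r * alpha \<epsilon>"
  have a0: "a > 0" using alpha_gt[OF e] r unfolding a_def by simp
  note O = opt_adm[OF r e, folded a_def]
  have lt: "c - a < c + a" using a0 by simp
  have adm: "admissible c r \<epsilon> (Q_opt c r \<epsilon>)" unfolding admissible_def using O by blast
  note AO = analysis[OF r e lt O, folded a_def]
  have mm: "min_mse c r \<epsilon> (Q_opt c r \<epsilon>)"
    unfolding min_mse_def
  proof (intro allI impI ballI)
    fix Q' w assume "admissible c r \<epsilon> Q'" and w: "w \<in> {c-r..c+r}"
    then obtain g1 g2 where G: "g1 < g2" "binary_output c r g1 g2 Q'" "unbiased c r Q'" "pldp c r \<epsilon> g1 g2 Q'"
      using adm_ordered[OF r] by blast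
    note AG = analysis[OF r e G, folded a_def]
    have "c - a \<le> w" "w \<le> c + a" using w a0 alpha_gt[OF e] r unfolding a_def
      by (auto intro: order_trans[of _ "c - r"] order_trans[of _ "c + r"]
          simp: mult_le_cancel_left1 less_imp_le)
    then have "(w - (c - a)) * ((c + a) - w) \<le> (w - g1) * (g2 - w)"
      using AG(1,2) by (intro mult_mono) auto
    then show "mse (Q_opt c r \<epsilon>) w \<le> mse Q' w" using AO(5)[OF w] AG(5)[OF w] by simp
  qed
  have part1: "satisfies_C123 c r \<epsilon> (Q_opt c r \<epsilon>)"
    unfolding satisfies_C123_def using adm mm by blast
  have part2: "Q w = Q_opt c r \<epsilon> w" if Q: "satisfies_C123 c r \<epsilon> Q" and w: "w \<in> {c-r..c+r}" for Q w
  proof -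
    obtain g1 g2 where G: "g1 < g2" "binary_output c r g1 g2 Q" "unbiased c r Q" "pldp c r \<epsilon> g1 g2 Q"
      using adm_ordered[OF r] Q unfolding satisfies_C123_def by blast
    note AG = analysis[OF r e G, folded a_def]
    have ic: "c \<in> {c-r..c+r}" using r by simp
    have "mse Q c \<le> mse (Q_opt c r \<epsilon>) c" using Q adm ic unfolding satisfies_C123_def min_mse_def by blast
    then have le: "(c - g1) * (g2 - c) \<le> a * a" using AG(5)[OF ic] AO(5)[OF ic] by simp
    have h1: "c - g1 \<ge> a" "g2 - c \<ge> a" using AG(1,2) by auto
    have "c - g1 = a"
    proof (rule ccontr)
      assume "c - g1 \<noteq> a"
      then have "c - g1 > a" using h1 by simp
      then have "a * (g2 - c) < (c - g1) * (g2 - c)" using h1 a0 by (intro mult_strict_right_mono) auto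
      moreover have "a * a \<le> a * (g2 - c)" using h1 a0 by (intro mult_left_mono) auto
      ultimately show False using le by simp
    qed
    moreover have "g2 - c = a"
    proof (rule ccontr)
      assume "g2 - c \<noteq> a"
      then have "g2 - c > a" using h1 by simp
      then have "(c - g1) * a < (c - g1) * (g2 - c)" using h1 a0 by (intro mult_strict_left_mono) auto
      moreover have "a * a \<le> (c - g1) * a" using h1 a0 by (intro mult_right_mono) auto
      ultimately show False using le by simp
    qed
    ultimately have g: "g1 = c - a" "g2 = c + a" by auto
    have s: "set_pmf (Q w) \<subseteq> {c - a, c + a}" using G(2) w g unfolding binary_output_def by blast
    have ne: "c - a \<noteq> c + a" using a0 by simp
    note F1 = bin_facts(3)[OF s ne]
    note F2 = bin_facts(3)[OF popt2(1)[OF r e w, folded a_def] ne]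
    have a2: "2 * r * alpha \<epsilon> = 2 * a" unfolding a_def by simp
    show ?thesis
    proof (rule pmf_eqI)
      fix i
      show "pmf (Q w) i = pmf (Q_opt c r \<epsilon> w) i"
      proof (cases "i = c + a")
        case True
        have "(w - (c - a)) / ((c + a) - (c - a)) = 1/2 + (w - c) / (2 * a)"
          using a0 by (simp add: field_simps)
        then show ?thesis using AG(3)[OF w] popt2(2)[OF r e w, folded a_def] g True
          unfolding a2 by simp
      next
        case False
        show ?thesis
        proof (cases "i = c - a")
          case True
          have "((c + a) - w) / ((c + a) - (c - a)) = 1 - (1/2 + (w - c) / (2 * a))"
            using a0 by (simp add: field_simps)
          then show ?thesis using AG(4)[OF w] popt2(3)[OF r e w, folded a_def] g True
            unfolding a2 by simp
        next
          case False
          then show ?thesis using F1 F2 \<open>i \<noteq> c + a\<close> by simp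
        qed
      qed
    qed
  qed
  show ?thesis using part1 part2 by blast
qed

end
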